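(* Let $G_{\tan\cup\sec}$ be the $q$-grammar with master variables $\{x,y\}$, rule $x_j\mapsto q^j(1+x_jx_{j+1})$, $y_j\mapsto q^jx_jy_{j+1}$ ($j\ge0$), and order DIO, with $q$-derivative $D$, and let $\Omega(D^n(x_0))$ be the number of terms of $D^n(x_0)$. Then for $n\ge3$, \[ \Omega(D^n(x_0))=\begin{cases}2k^3+5k^2+2,& n=2k+1,\\ (k+2)(2k^2-2k+1),& n=2k.\end{cases} \]
   Context: $\mathbb{K}$ is a commutative ring with unity and characteristic zero, $q$ an indeterminate. For a set $S$ of master variables, $\mathbb{S}=\{s_i:s\in S,\ i\ge0\}$ is a set of non-commuting variables, $F(\mathbb{S})$ the free group on $\mathbb{S}$, $\mathbb{E}=\mathbb{K}[q][F(\mathbb{S})]$ its group algebra. A rule $R$ assigns to each $s_i$ an element of $\mathbb{E}$. The up-arrow $\uparrow$ is the linear map replacing each letter $s_i^{\pm1}$ of a word by $s_{i+1}^{\pm1}$. DIO is the order that stably reorders the letters of a word according to the position of their underlying variable in the sequence $\dots,x_2,y_2,x_1,y_1,x_0,y_0$ (extended linearly). The $q$-derivative of a $q$-grammar $(S,R,\rho)$ is the $\mathbb{K}[q]$-linear map with $D(w_1\cdots w_n)=\sum_{j=1}^n\rho\big(w_1\cdots w_{j-1}R(w_j)\uparrow(w_{j+1}\cdots w_n)\big)$ for letters $w_j$, $D^0=\mathrm{id}$, $D^k=D\circ D^{k-1}$. Writing an element of $\mathbb{E}$ as $\sum_{w\in F(\mathbb{S})}a_ww$, its terms are the words $w$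 (including possibly the empty word) with $a_w\ne0$. *)

theory Defs
  imports "HOL-Computational_Algebra.Polynomial"
begin

text \<open>Letters s_i are pairs (s, i) of a master variable s and an index i.
  Words (positive words of the free group) are lists of letters.
  An element of the algebra is a function from words to coefficients in K[q]
  (finite support in all cases considered).\<close>

type_synonym 's word = "('s \<times> nat) list"
type_synonym ('s, 'k) elem = "'s word \<Rightarrow> 'k poly"

definition up :: "'s word \<Rightarrow> 's word" where
  "up w = map (\<lambda>(s, i). (s, Suc i)) w"

definition terms :: "('s, 'k::zero) elem \<Rightarrow> 's word set" where
  "terms f = {w. f w \<noteq> 0}"

text \<open>a rule assigns to each letter a finite formal sum of monomials (coefficient, word)\<close>
type_synonym ('s, 'k) rule = "('s \<times> nat) \<Rightarrow> ('k poly \<times> 's word) list"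

definition qder_word ::
  "('s, 'k::comm_ring_1) rule \<Rightarrow> ('s word \<Rightarrow> 's word) \<Rightarrow> 's word \<Rightarrow> ('s, 'k) elem" where
  "qder_word R \<rho> w = (\<lambda>v. \<Sum>j<length w.
       sum_list (map (\<lambda>(c, u). if \<rho> (take j w @ u @ up (drop (Suc j) w)) = v then c else 0)
                     (R (w ! j))))"

definition qder ::
  "('s, 'k::comm_ring_1) rule \<Rightarrow> ('s word \<Rightarrow> 's word) \<Rightarrow> ('s, 'k) elem \<Rightarrow> ('s, 'k) elem" where
  "qder R \<rho> f = (\<lambda>v. \<Sum>w\<in>terms f. f w * qder_word R \<rho> w v)"

definition word_elem :: "'s word \<Rightarrow> ('s, 'k::comm_ring_1) elem" where
  "word_elem u = (\<lambda>w. if w = u then 1 else 0)"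

definition qvar :: "'k::comm_ring_1 poly" where
  "qvar = [:0, 1:]"

datatype xy = X | Y

text \<open>DIO: stable reordering by position in the sequence ..., x2, y2, x1, y1, x0, y0\<close>
definition dio_pos :: "xy \<times> nat \<Rightarrow> int" where
  "dio_pos l = (case l of (X, i) \<Rightarrow> - 2 * int i | (Y, i) \<Rightarrow> - 2 * int i + 1)"

definition DIO :: "xy word \<Rightarrow> xy word" where
  "DIO w = sort_key dio_pos w"

definition tansec_rule :: "(xy, 'k::comm_ring_1) rule" where
  "tansec_rule l = (case l of
      (X, j) \<Rightarrow> [(qvar ^ j, []), (qvar ^ j, [(X, j), (X, Suc j)])]
    | (Y, j) \<Rightarrow> [(qvar ^ j, [(X, j), (Y, Suc j)])])"

definition D_tansec :: "(xy, 'k::comm_ring_1) elem \<Rightarrow> (xy, 'k) elem" where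
  "D_tansec = qder tansec_rule DIO"

end

theory Submission
  imports Defs
begin

definition blk :: "nat \<Rightarrow> nat \<Rightarrow> nat \<Rightarrow> xy word" where
  "blk m p r = replicate p (X, Suc m) @ replicate r (X, m)"

lemma inj_dio_pos: "inj dio_pos"
  unfolding inj_def dio_pos_def by (auto split: xy.splits prod.splits; presburger)

lemma sorted_blk: "sorted (map dio_pos (blk m p r))"
  unfolding blk_def by (auto simp: sorted_append dio_pos_def)

lemma DIO_blk: "mset xs = mset (blk m p r) \<Longrightarrow> DIO xs = blk m p r"
  unfolding DIO_def
  by (rule sort_key_inj_key_eq) (auto intro: inj_on_subset[OF inj_dio_pos] sorted_blk)

lemma mset_blk: "mset (blk m p r) = replicate_mset p (X, Suc m) + replicate_mset r (X, m)"
  by (simp add: blk_def)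

lemma up_rep: "up (replicate k (s, i)) = replicate k (s, Suc i)"
  by (simp add: up_def)

lemma up_app: "up (xs @ ys) = up xs @ up ys"
  by (simp add: up_def)

definition opts :: "xy \<times> nat \<Rightarrow> xy word list" where
  "opts l = (case l of (X, j) \<Rightarrow> [[], [(X, j), (X, Suc j)]] | (Y, j) \<Rightarrow> [[(X, j), (Y, Suc j)]])"

definition dset :: "xy word \<Rightarrow> xy word set" where
  "dset w = {v. \<exists>j<length w. \<exists>u\<in>set (opts (w ! j)). v = DIO (take j w @ u @ up (drop (Suc j) w))}"

lemma blk_lo:
  assumes "j < p"
  shows "take j (blk m p r) = replicate j (X, Suc m)"
    "drop (Suc j) (blk m p r) = replicate (p - Suc j) (X, Suc m) @ replicate r (X, m)"
    "blk m p r ! j = (X, Suc m)"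
  using assms by (auto simp: blk_def nth_append)

lemma blk_hi:
  assumes "i < r"
  shows "take (p + i) (blk m p r) = replicate p (X, Suc m) @ replicate i (X, m)"
    "drop (Suc (p + i)) (blk m p r) = replicate (r - Suc i) (X, m)"
    "blk m p r ! (p + i) = (X, m)"
  using assms by (auto simp: blk_def nth_append)

lemma replicate_mset_plus: "replicate_mset (a + b) x = replicate_mset a x + replicate_mset b x"
  by (induct a) auto

lemma dset_blk:
  "v \<in> dset (blk m p r) \<longleftrightarrow>
    (\<exists>j<p. v = blk (Suc m) (p - 1 - j) (j + r) \<or> v = blk (Suc m) (p - j) (j + 1 + r)) \<or>
    (\<exists>i<r. v = blk m (p + r - 1 - i) i \<or> v = blk m (p + r - i) (Suc i))"
proof -
  have lo: "set (map (\<lambda>u. DIO (take j (blk m p r) @ u @ up (drop (Suc j) (blk m p r)))) (opts (blk m p r ! j)))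
      = {blk (Suc m) (p - 1 - j) (j + r), blk (Suc m) (p - j) (j + 1 + r)}" if "j < p" for j
  proof -
    have a: "DIO (replicate j (X, Suc m) @ replicate (p - Suc j) (X, Suc (Suc m)) @ replicate r (X, Suc m))
       = blk (Suc m) (p - 1 - j) (j + r)"
      by (rule DIO_blk) (simp add: mset_blk ac_simps replicate_mset_plus)
    have b: "DIO (replicate j (X, Suc m) @ [(X, Suc m), (X, Suc (Suc m))] @ replicate (p - Suc j) (X, Suc (Suc m)) @ replicate r (X, Suc m))
       = blk (Suc m) (p - j) (j + 1 + r)"
    proof (rule DIO_blk)
      have "p - j = Suc (p - Suc j)" using that by simp
      then show "mset (replicate j (X, Suc m) @ [(X, Suc m), (X, Suc (Suc m))] @ replicate (p - Suc j) (X, Suc (Suc m)) @ replicate r (X, Suc m)) =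
        mset (blk (Suc m) (p - j) (j + 1 + r))"
        by (simp add: mset_blk ac_simps replicate_mset_plus)
    qed
    show ?thesis using that a b by (simp add: blk_lo opts_def up_app up_rep)
  qed
  have hi: "set (map (\<lambda>u. DIO (take (p + i) (blk m p r) @ u @ up (drop (Suc (p + i)) (blk m p r)))) (opts (blk m p r ! (p + i))))
      = {blk m (p + r - 1 - i) i, blk m (p + r - i) (Suc i)}" if "i < r" for i
  proof -
    have a: "DIO (replicate p (X, Suc m) @ replicate i (X, m) @ replicate (r - Suc i) (X, Suc m))
       = blk m (p + r - 1 - i) i"
    proof (rule DIO_blk)
      have "p + r - 1 - i = p + (r - Suc i)" using that by simp
      then show "mset (replicate p (X, Suc m) @ replicate i (X, m) @ replicate (r - Suc i) (X, Suc m)) = mset (blk m (p + r - 1 - i) i)"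
        by (simp add: mset_blk ac_simps replicate_mset_plus)
    qed
    have b: "DIO (replicate p (X, Suc m) @ replicate i (X, m) @ [(X, m), (X, Suc m)] @ replicate (r - Suc i) (X, Suc m))
       = blk m (p + r - i) (Suc i)"
    proof (rule DIO_blk)
      obtain k where k: "r = Suc (i + k)" using \<open>i < r\<close> by (auto dest: less_imp_Suc_add)
      then show "mset (replicate p (X, Suc m) @ replicate i (X, m) @ [(X, m), (X, Suc m)] @ replicate (r - Suc i) (X, Suc m)) = mset (blk m (p + r - i) (Suc i))"
        by (simp add: mset_blk ac_simps replicate_mset_plus)
    qed
    show ?thesis using that a b by (simp add: blk_hi opts_def up_app up_rep)
  qed
  have len: "length (blk m p r) = p + r" by (simp add: blk_def)
  have "v \<in> dset (blk m p r) \<longleftrightarrow> (\<exists>j<p + r. v \<in> set (map (\<lambda>u. DIO (take j (blk m p r) @ u @ up (drop (Suc j) (blk m p r)))) (opts (blk m p r ! j))))"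
    unfolding dset_def len by auto
  also have "\<dots> \<longleftrightarrow> (\<exists>j<p. v \<in> set (map (\<lambda>u. DIO (take j (blk m p r) @ u @ up (drop (Suc j) (blk m p r)))) (opts (blk m p r ! j))))
     \<or> (\<exists>i<r. v \<in> set (map (\<lambda>u. DIO (take (p + i) (blk m p r) @ u @ up (drop (Suc (p + i)) (blk m p r)))) (opts (blk m p r ! (p + i)))))"
    (is "(\<exists>j<p + r. ?P j) \<longleftrightarrow> _")
  proof
    assume "\<exists>j<p + r. ?P j"
    then obtain j where "j < p + r" "?P j" by blast
    show "(\<exists>j<p. ?P j) \<or> (\<exists>i<r. ?P (p + i))"
    proof (cases "j < p")
      case True
      then show ?thesis using \<open>?P j\<close> by blast
    next
      case False
      then have "p + (j - p) = j" "j - p < r" using \<open>j < p + r\<close> by auto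
      then show ?thesis using \<open>?P j\<close> by metis
    qed
  next
    assume "(\<exists>j<p. ?P j) \<or> (\<exists>i<r. ?P (p + i))"
    then show "\<exists>j<p + r. ?P j"
    proof
      assume "\<exists>j<p. ?P j"
      then obtain j where "j < p" "?P j" by blast
      then show ?thesis by (intro exI[of _ j]) simp
    next
      assume "\<exists>i<r. ?P (p + i)"
      then obtain i where "i < r" "?P (p + i)" by blast
      then show ?thesis by (intro exI[of _ "p + i"]) simp
    qed
  qed
  also have "\<dots> \<longleftrightarrow> (\<exists>j<p. v = blk (Suc m) (p - 1 - j) (j + r) \<or> v = blk (Suc m) (p - j) (j + 1 + r)) \<or>
    (\<exists>i<r. v = blk m (p + r - 1 - i) i \<or> v = blk m (p + r - i) (Suc i))"
    by (auto simp: lo hi simp del: set_map)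
  finally show ?thesis .
qed


definition cntj :: "xy word \<Rightarrow> xy word \<Rightarrow> nat \<Rightarrow> nat" where
  "cntj w v j = length (filter (\<lambda>u. DIO (take j w @ u @ up (drop (Suc j) w)) = v) (opts (w ! j)))"

lemma poly_qvar_pow [simp]: "poly (qvar :: 'k::comm_ring_1 poly) 1 = 1"
  by (simp add: qvar_def)

lemma poly_qder_word_j:
  "poly (sum_list (map (\<lambda>(c, u). if DIO (take j w @ u @ up (drop (Suc j) w)) = v then c else 0)
      (tansec_rule (w ! j) :: ('k::comm_ring_1 poly \<times> xy word) list))) 1 = of_nat (cntj w v j)"
  by (cases "w ! j" rule: prod.exhaust; rename_tac s i; case_tac s)
     (simp_all add: tansec_rule_def cntj_def opts_def)

lemma qder_word_j_zero:
  "cntj w v j = 0 \<Longrightarrow> sum_list (map (\<lambda>(c, u). if DIO (take j w @ u @ up (drop (Suc j) w)) = v then c else 0)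
      (tansec_rule (w ! j) :: ('k::comm_ring_1 poly \<times> xy word) list)) = 0"
  by (cases "w ! j" rule: prod.exhaust; rename_tac s i; case_tac s)
     (simp_all add: tansec_rule_def cntj_def opts_def split: if_splits)

lemma poly_qder_word:
  "poly (qder_word tansec_rule DIO w v :: 'k::comm_ring_1 poly) 1 = of_nat (\<Sum>j<length w. cntj w v j)"
  unfolding qder_word_def poly_sum of_nat_sum
  by (rule sum.cong) (simp_all only: poly_qder_word_j)

lemma qder_word_zero:
  "(\<Sum>j<length w. cntj w v j) = 0 \<Longrightarrow> qder_word tansec_rule DIO w v = (0 :: 'k::comm_ring_1 poly)"
  unfolding qder_word_def
  by (rule sum.neutral) (simp add: qder_word_j_zero)

lemma dset_cnt: "v \<in> dset w \<longleftrightarrow> (\<Sum>j<length w. cntj w v j) \<noteq> 0"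
  unfolding dset_def cntj_def by (auto simp: filter_empty_conv)

lemma dset_finite: "finite (dset w)"
proof -
  have "dset w = (\<Union>j\<in>{..<length w}. (\<lambda>u. DIO (take j w @ u @ up (drop (Suc j) w))) ` set (opts (w ! j)))"
    unfolding dset_def by auto
  then show ?thesis by simp
qed

definition invq :: "(xy, 'k::comm_ring_1) elem \<Rightarrow> bool" where
  "invq f \<longleftrightarrow> finite (terms f) \<and> (\<forall>w\<in>terms f. \<exists>m>0. poly (f w) 1 = of_nat m)"

lemma step:
  fixes f :: "(xy, 'k::{comm_ring_1, ring_char_0}) elem"
  assumes "invq f"
  shows "terms (D_tansec f) = (\<Union>w\<in>terms f. dset w)" "invq (D_tansec f)"
proof -
  have fin: "finite (terms f)" using assms by (simp add: invq_def)
  have "\<forall>w\<in>terms f. \<exists>m. m > 0 \<and> poly (f w) 1 = of_nat m" using assms by (simp add: invq_def)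
  then obtain a where a: "\<And>w. w \<in> terms f \<Longrightarrow> a w > 0 \<and> poly (f w) 1 = of_nat (a w)"
    by metis
  define S where "S v = (\<Sum>w\<in>terms f. a w * (\<Sum>j<length w. cntj w v j))" for v
  have ev: "poly (D_tansec f v) 1 = of_nat (S v)" for v
    unfolding D_tansec_def qder_def poly_sum S_def of_nat_sum
    by (rule sum.cong) (simp_all add: poly_qder_word a)
  have Spos: "S v \<noteq> 0 \<longleftrightarrow> v \<in> (\<Union>w\<in>terms f. dset w)" for v
    using fin a by (auto simp: S_def dset_cnt)
  have zero: "D_tansec f v = 0" if "v \<notin> (\<Union>w\<in>terms f. dset w)" for v
    unfolding D_tansec_def qder_def
    by (rule sum.neutral) (use that in \<open>auto simp: dset_cnt qder_word_zero\<close>)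
  have T: "terms (D_tansec f) = (\<Union>w\<in>terms f. dset w)"
  proof (intro set_eqI iffI)
    fix v assume "v \<in> terms (D_tansec f)"
    then show "v \<in> (\<Union>w\<in>terms f. dset w)" using zero unfolding terms_def by blast
  next
    fix v assume v: "v \<in> (\<Union>w\<in>terms f. dset w)"
    then have "poly (D_tansec f v) 1 \<noteq> 0" using ev Spos by simp
    then show "v \<in> terms (D_tansec f)" unfolding terms_def by auto
  qed
  show "terms (D_tansec f) = (\<Union>w\<in>terms f. dset w)" by (fact T)
  show "invq (D_tansec f)"
    unfolding invq_def T using fin ev Spos by (auto simp: dset_finite)
qed

abbreviation fn :: "nat \<Rightarrow> (xy, 'k::{comm_ring_1, ring_char_0}) elem" where
  "fn n \<equiv> (D_tansec ^^ n) (word_elem [(X, 0)])"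

lemma inv_fn: "invq (fn n :: (xy, 'k::{comm_ring_1, ring_char_0}) elem)"
proof (induction n)
  case 0
  have "terms (word_elem [(X, 0)] :: (xy, 'k) elem) = {[(X, 0)]}"
    by (auto simp: terms_def word_elem_def)
  then show ?case by (auto simp: invq_def word_elem_def intro: exI[of _ 1])
next
  case (Suc n)
  then show ?case by (simp add: step)
qed

lemma terms_fn_Suc:
  "terms (fn (Suc n) :: (xy, 'k::{comm_ring_1, ring_char_0}) elem) = (\<Union>w\<in>terms (fn n :: (xy, 'k) elem). dset w)"
  using step(1)[OF inv_fn] by simp

lemma terms_fn_0:
  "terms (fn 0 :: (xy, 'k::{comm_ring_1, ring_char_0}) elem) = {blk 0 0 1}"
  by (auto simp: terms_def word_elem_def blk_def)


definition goodA :: "nat \<Rightarrow> nat \<Rightarrow> nat \<Rightarrow> nat \<Rightarrow> bool" where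
  "goodA n m p r \<longleftrightarrow> 1 \<le> m \<and> m + 2 \<le> n \<and> 1 \<le> p \<and> 1 \<le> r \<and> p + r = n + 1"

definition goodB :: "nat \<Rightarrow> nat \<Rightarrow> nat \<Rightarrow> nat \<Rightarrow> bool" where
  "goodB n m p r \<longleftrightarrow> 1 \<le> m \<and> (0 < p \<longrightarrow> m + 2 \<le> n) \<and> m + 1 \<le> n \<and> p + r + 1 \<le> n \<and> odd (n + p + r)"

definition good :: "nat \<Rightarrow> xy word \<Rightarrow> bool" where
  "good n w \<longleftrightarrow> w = blk 0 n 1 \<or> w = blk (n - 1) 1 n \<or>
     (\<exists>m p r. w = blk m p r \<and> (goodA n m p r \<or> goodB n m p r))"

lemma blk_r0: "blk m p 0 = blk (Suc m) 0 p"
  by (simp add: blk_def)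

lemma goodA_I: "goodA n m p r \<Longrightarrow> good n (blk m p r)"
  unfolding good_def by blast

lemma goodB_I: "goodB n m p r \<Longrightarrow> good n (blk m p r)"
  unfolding good_def by blast

lemma fwd:
  assumes n: "2 \<le> n" and g: "good n w" and v: "v \<in> dset w"
  shows "good (Suc n) v"
  using g[unfolded good_def]
proof (elim disjE exE conjE)
  assume w: "w = blk 0 n 1"
  show ?thesis using v n unfolding w dset_blk
    apply (elim disjE exE conjE)
    subgoal for j by (hypsubst, rule goodB_I) (auto simp: goodB_def)
    subgoal for j by (hypsubst, rule goodA_I) (auto simp: goodA_def)
    subgoal for i apply hypsubst apply (simp add: blk_r0) apply (rule goodB_I) by (auto simp: goodB_def)
    subgoal for i apply hypsubst by (simp add: good_def)
    done
next
  assume w: "w = blk (n - 1) 1 n"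
  show ?thesis using v n unfolding w dset_blk
    apply (elim disjE exE conjE)
    subgoal for j by (hypsubst, rule goodB_I) (auto simp: goodB_def)
    subgoal for j by (hypsubst, simp add: good_def)
    subgoal for i by (hypsubst, rule goodB_I) (auto simp: goodB_def)
    subgoal for i by (hypsubst, rule goodA_I) (auto simp: goodA_def)
    done
next
  fix m p r assume w: "w = blk m p r" and a: "goodA n m p r"
  show ?thesis using v n a unfolding w dset_blk
    apply (elim disjE exE conjE)
    subgoal for j by (hypsubst, rule goodB_I) (auto simp: goodB_def goodA_def)
    subgoal for j by (hypsubst, rule goodA_I) (auto simp: goodA_def)
    subgoal for i by (hypsubst, rule goodB_I) (auto simp: goodB_def goodA_def)
    subgoal for i by (hypsubst, rule goodA_I) (auto simp: goodA_def)
    done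
next
  fix m p r assume w: "w = blk m p r" and b: "goodB n m p r"
  show ?thesis using v n b unfolding w dset_blk
    apply (elim disjE exE conjE)
    subgoal for j by (hypsubst, rule goodB_I) (auto simp: goodB_def)
    subgoal for j by (hypsubst, rule goodB_I) (auto simp: goodB_def)
    subgoal for i by (hypsubst, rule goodB_I) (auto simp: goodB_def)
    subgoal for i by (hypsubst, rule goodB_I) (auto simp: goodB_def)
    done
qed

lemma bwd_unif:
  assumes n: "2 \<le> n" and m: "1 \<le> m" "m \<le> n" and r: "1 \<le> r" "r \<le> n" and par: "odd (Suc n + r)"
  shows "\<exists>w. good n w \<and> blk m 0 r \<in> dset w"
proof (cases "r = n")
  case True
  show ?thesis
  proof (cases "m = 1")
    case True
    have "good n (blk 0 n 1)" by (simp add: good_def)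
    moreover have "blk m 0 r \<in> dset (blk 0 n 1)"
      unfolding dset_blk by (rule disjI2, rule exI[of _ 0]) (simp add: blk_r0 True \<open>r = n\<close>)
    ultimately show ?thesis by blast
  next
    case False
    have "good n (blk (m - 1) 1 n)"
    proof (cases "m = n")
      case True then show ?thesis by (simp add: good_def)
    next
      case False
      then have "goodA n (m - 1) 1 n" using m \<open>m \<noteq> 1\<close> by (auto simp: goodA_def)
      then show ?thesis by (rule goodA_I)
    qed
    moreover have "blk m 0 r \<in> dset (blk (m - 1) 1 n)"
      unfolding dset_blk using m False \<open>r = n\<close> by (intro disjI2, intro exI[of _ 0]) (simp add: blk_r0)
    ultimately show ?thesis by blast
  qed
next
  case False
  then have r2: "r + 2 \<le> n" using r par by presburger
  show ?thesis
  proof (cases "m = n")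
    case False
    have "goodB n m 0 (r + 1)" using False m r2 par by (auto simp: goodB_def)
    moreover have "blk m 0 r \<in> dset (blk m 0 (r + 1))"
      unfolding dset_blk by (intro disjI2, intro exI[of _ r]) simp
    ultimately show ?thesis by (blast intro: goodB_I)
  next
    case True
    have "goodB n (n - 1) 0 (r + 1)" using True m r2 par n by (auto simp: goodB_def)
    moreover have "blk m 0 r \<in> dset (blk (n - 1) 0 (r + 1))"
      unfolding dset_blk using True n by (intro disjI2, intro exI[of _ 0]) (simp add: blk_r0)
    ultimately show ?thesis by (blast intro: goodB_I)
  qed
qed

lemma bwd:
  assumes n: "2 \<le> n" and g: "good (Suc n) v"
  shows "\<exists>w. good n w \<and> v \<in> dset w"
  using g[unfolded good_def]
proof (elim disjE exE conjE)
  assume v: "v = blk 0 (Suc n) 1"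
  have "good n (blk 0 n 1)" by (simp add: good_def)
  moreover have "v \<in> dset (blk 0 n 1)"
    unfolding dset_blk v by (intro disjI2, intro exI[of _ 0]) simp
  ultimately show ?thesis by blast
next
  assume v: "v = blk (Suc n - 1) 1 (Suc n)"
  have "good n (blk (n - 1) 1 n)" by (simp add: good_def)
  moreover have "v \<in> dset (blk (n - 1) 1 n)"
    unfolding dset_blk v using n by (intro disjI1, intro exI[of _ 0]) simp
  ultimately show ?thesis by blast
next
  fix m p r assume v: "v = blk m p r" and a: "goodA (Suc n) m p r"
    show ?thesis
    proof (cases "r \<le> n")
      case True
      have "good n (blk m 1 n)"
      proof (cases "m + 2 \<le> n")
        case True
        then have "goodA n m 1 n" using a by (auto simp: goodA_def)
        then show ?thesis by (rule goodA_I)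
      next
        case False
        then have "m = n - 1" using a by (auto simp: goodA_def)
        then show ?thesis by (simp add: good_def)
      qed
      moreover have pe: "p = Suc (Suc n) - r" using a by (auto simp: goodA_def)
      moreover have "v \<in> dset (blk m 1 n)"
        unfolding dset_blk v pe using a True
        by (intro disjI2, intro exI[of _ "r - 1"]) (auto simp: goodA_def)
      ultimately show ?thesis by blast
    next
      case False
      then have rp: "r = Suc n" "p = 1" using a by (auto simp: goodA_def)
      have "good n (blk (m - 1) n 1)"
      proof (cases "m = 1")
        case True
        then show ?thesis by (simp add: good_def)
      next
        case False
        then have "goodA n (m - 1) n 1" using a by (auto simp: goodA_def)
        then show ?thesis by (rule goodA_I)
      qed
      moreover have "v \<in> dset (blk (m - 1) n 1)"
        unfolding dset_blk v using a rp n
        by (intro disjI1, intro exI[of _ "n - 1"]) (auto simp: goodA_def)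
      ultimately show ?thesis by blast
    qed
next
    fix m p r assume v: "v = blk m p r" and b: "goodB (Suc n) m p r"
    show ?thesis
    proof (cases "p + r = 0")
      case True
      have "goodB n 1 0 1" using b n True by (auto simp: goodB_def)
      moreover have "v \<in> dset (blk 1 0 1)"
        unfolding dset_blk v using True by (intro disjI2, intro exI[of _ 0]) (simp add: blk_def)
      ultimately show ?thesis by (blast intro: goodB_I)
    next
      case False
      consider "p \<ge> 1" "r \<ge> 1" | "p = 0" "r \<ge> 1" | "p \<ge> 1" "r = 0" using False by linarith
      then show ?thesis
      proof cases
        case 1
        have "goodB n m 0 (p + r - 1)" using b 1 by (auto simp: goodB_def)
        moreover have "v \<in> dset (blk m 0 (p + r - 1))"
          unfolding dset_blk v using 1 by (intro disjI2, intro exI[of _ "r - 1"]) auto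
        ultimately show ?thesis by (blast intro: goodB_I)
      next
        case 2
        then show ?thesis using bwd_unif[of n m r] b n unfolding v by (auto simp: goodB_def)
      next
        case 3
        then show ?thesis using bwd_unif[of n "Suc m" p] b n unfolding v by (auto simp: goodB_def blk_r0)
      qed
    qed
qed

lemma step_good:
  assumes "2 \<le> n"
  shows "{w. good (Suc n) w} = (\<Union>w\<in>{w. good n w}. dset w)"
  using fwd[OF assms] bwd[OF assms] by blast


lemma dset_Nil: "dset [] = {}"
  by (simp add: dset_def)

lemma dset_011: "dset (blk 0 1 1) = {blk 1 0 1, blk 1 1 2, blk 0 1 0, blk 0 2 1}"
proof (intro set_eqI)
  fix v
  have "(\<exists>j<(1::nat). P j) \<longleftrightarrow> P 0" for P by auto
  then show "v \<in> dset (blk 0 1 1) \<longleftrightarrow> v \<in> {blk 1 0 1, blk 1 1 2, blk 0 1 0, blk 0 2 1}"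
    unfolding dset_blk by (simp add: numeral_2_eq_2)
qed

lemma t1: "terms (fn 1 :: (xy, 'k::{comm_ring_1, ring_char_0}) elem) = {blk 0 0 0, blk 0 1 1}"
proof -
  have "terms (fn (Suc 0) :: (xy, 'k) elem) = dset (blk 0 0 1)"
    using terms_fn_Suc[of 0, where 'k='k] unfolding terms_fn_0 by (simp only: UN_insert UN_empty Un_empty_right)
  also have "dset (blk 0 0 1) = {blk 0 0 0, blk 0 1 1}"
  proof (intro set_eqI)
    fix v
    have "(\<exists>j<(1::nat). P j) \<longleftrightarrow> P 0" for P by auto
    then show "v \<in> dset (blk 0 0 1) \<longleftrightarrow> v \<in> {blk 0 0 0, blk 0 1 1}"
      unfolding dset_blk by simp
  qed
  finally show ?thesis by simp
qed
lemma terms_fn_2: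
  "terms (fn 2 :: (xy, 'k::{comm_ring_1, ring_char_0}) elem) = {w. good 2 w}"
proof -
  have t1: "terms (fn 1 :: (xy, 'k) elem) = {blk 0 0 0, blk 0 1 1}" by (rule t1)
  have e: "blk 0 0 0 = []" "blk 0 1 0 = blk 1 0 1" by (simp_all add: blk_def)
  have "terms (fn (Suc 1) :: (xy, 'k) elem) = dset (blk 0 0 0) \<union> dset (blk 0 1 1)"
    using terms_fn_Suc[of 1, where 'k='k] unfolding t1 by (simp only: UN_insert UN_empty Un_empty_right)
  then have "terms (fn 2 :: (xy, 'k) elem) = dset (blk 0 0 0) \<union> dset (blk 0 1 1)"
    by (simp only: Suc_1)
  then have t2: "terms (fn 2 :: (xy, 'k) elem) = {blk 1 0 1, blk 1 1 2, blk 0 2 1}"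
    unfolding e(1) dset_Nil dset_011 e(2) by auto
  have g: "{w. good 2 w} = {blk 1 0 1, blk 1 1 2, blk 0 2 1}"
  proof (intro set_eqI iffI)
    fix w assume w: "w \<in> {w. good 2 w}"
    have A: "\<not> goodA 2 m p r" for m p r by (simp add: goodA_def)
    have B: "m = 1 \<and> p = 0 \<and> r = 1" if "goodB 2 m p r" for m p r
    proof -
      have "m = 1" "p = 0" "r \<le> 1" "odd r" using that by (auto simp: goodB_def)
      then show ?thesis by (cases r) auto
    qed
    from w consider "w = blk 0 2 1" | "w = blk 1 1 2" | m p r where "w = blk m p r" "goodB 2 m p r"
      unfolding good_def using A by simp blast
    then show "w \<in> {blk 1 0 1, blk 1 1 2, blk 0 2 1}"
      by cases (use B in auto)
  next
    fix w assume "w \<in> {blk 1 0 1, blk 1 1 2, blk 0 2 1}"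
    moreover have "goodB 2 1 0 1" by (simp add: goodB_def)
    ultimately show "w \<in> {w. good 2 w}"
      using goodB_I[of 2 1 0 1] by (simp add: good_def) (elim disjE; simp)
  qed
  show ?thesis using t2 g by simp
qed

lemma terms_fn_good:
  "2 \<le> n \<Longrightarrow> terms (fn n :: (xy, 'k::{comm_ring_1, ring_char_0}) elem) = {w. good n w}"
proof (induction n rule: dec_induct)
  case base
  then show ?case by (rule terms_fn_2)
next
  case (step n)
  then show ?case using terms_fn_Suc[of n, where 'k='k] step_good[of n] by simp
qed


definition Ls :: "nat \<Rightarrow> nat set" where
  "Ls n = {L. 1 \<le> L \<and> L + 1 \<le> n \<and> odd (n + L)}"

definition CA :: "nat \<Rightarrow> (nat \<times> nat \<times> nat) set" where
  "CA n = (\<lambda>(m, p). (m, p, n + 1 - p)) ` ({1..n-2} \<times> {1..n})"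

definition CB1 :: "nat \<Rightarrow> (nat \<times> nat \<times> nat) set" where
  "CB1 n = (\<lambda>(L, m, p). (m, p, L - p)) ` (SIGMA L:Ls n. {1..n-2} \<times> {..<L})"

definition CB2 :: "nat \<Rightarrow> (nat \<times> nat \<times> nat) set" where
  "CB2 n = (\<lambda>L. (n - 1, 0, L)) ` Ls n"

definition Cset :: "nat \<Rightarrow> (nat \<times> nat \<times> nat) set" where
  "Cset n = insert (0, n, 1) (insert (n - 1, 1, n) (CA n \<union> CB1 n \<union> CB2 n))"

definition b3 :: "nat \<times> nat \<times> nat \<Rightarrow> xy word" where
  "b3 t = (case t of (m, p, r) \<Rightarrow> blk m p r)"

lemma good_set:
  assumes n: "2 \<le> n"
  shows "{w. good n w} = b3 ` Cset n \<union> (if odd n then {[]} else {})"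
proof (intro set_eqI iffI)
  fix w assume "w \<in> {w. good n w}"
  then have g: "good n w" by simp
  show "w \<in> b3 ` Cset n \<union> (if odd n then {[]} else {})"
    using g[unfolded good_def]
  proof (elim disjE exE conjE)
    assume "w = blk 0 n 1" then show ?thesis by (force simp: Cset_def b3_def)
  next
    assume "w = blk (n - 1) 1 n" then show ?thesis by (force simp: Cset_def b3_def)
  next
    fix m p r assume w: "w = blk m p r" and a: "goodA n m p r"
    then have "(m, p, r) \<in> CA n" unfolding CA_def goodA_def
      by (intro image_eqI[of _ _ "(m, p)"]) auto
    then show ?thesis using w by (force simp: Cset_def b3_def)
  next
    fix m p r assume w: "w = blk m p r" and b: "goodB n m p r"
    show ?thesis
    proof (cases "r \<ge> 1")
      case True
      show ?thesis
      proof (cases "m + 2 \<le> n")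
        case True
        have "(m, p, r) \<in> CB1 n" unfolding CB1_def
          by (rule image_eqI[of _ _ "(p + r, m, p)"]) (use b True \<open>r \<ge> 1\<close> in \<open>auto simp: goodB_def Ls_def\<close>)
        then show ?thesis using w by (force simp: Cset_def b3_def)
      next
        case False
        then have "m = n - 1" "p = 0" using b by (auto simp: goodB_def)
        then have "(m, p, r) \<in> CB2 n" unfolding CB2_def
          using b \<open>r \<ge> 1\<close> by (auto simp: goodB_def Ls_def)
        then show ?thesis using w by (force simp: Cset_def b3_def)
      qed
    next
      case False
      then have r0: "r = 0" by simp
      show ?thesis
      proof (cases "p = 0")
        case True
        then have "w = []" "odd n" using w r0 b by (auto simp: blk_def goodB_def)
        then show ?thesis by simp
      next
        case False
        have w': "w = blk (Suc m) 0 p" using w r0 by (simp add: blk_r0)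
        show ?thesis
        proof (cases "m + 3 \<le> n")
          case True
          have "(Suc m, 0, p) \<in> CB1 n" unfolding CB1_def
            by (rule image_eqI[of _ _ "(p, Suc m, 0)"]) (use b True False r0 in \<open>auto simp: goodB_def Ls_def\<close>)
          then show ?thesis using w' by (force simp: Cset_def b3_def)
        next
          case False
          then have "Suc m = n - 1" using b \<open>p \<noteq> 0\<close> by (auto simp: goodB_def)
          then have "(Suc m, 0, p) \<in> CB2 n" unfolding CB2_def
            using b r0 \<open>p \<noteq> 0\<close> by (auto simp: goodB_def Ls_def)
          then show ?thesis using w' by (force simp: Cset_def b3_def)
        qed
      qed
    qed
  qed
next
  fix w assume w: "w \<in> b3 ` Cset n \<union> (if odd n then {[]} else {})"
  have gC: "good n (b3 t)" if "t \<in> Cset n" for t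
  proof -
    from that consider "t = (0, n, 1)" | "t = (n - 1, 1, n)" | "t \<in> CA n" | "t \<in> CB1 n" | "t \<in> CB2 n"
      unfolding Cset_def by blast
    then show ?thesis
    proof cases
      case 1 then show ?thesis by (simp add: b3_def good_def)
    next
      case 2 then show ?thesis by (simp add: b3_def good_def)
    next
      case 3
      then obtain m p where "m \<in> {1..n-2}" "p \<in> {1..n}" "t = (m, p, n + 1 - p)" unfolding CA_def by auto
      then show ?thesis by (auto simp: b3_def goodA_def intro!: goodA_I)
    next
      case 4
      then obtain L m p where "L \<in> Ls n" "m \<in> {1..n-2}" "p < L" "t = (m, p, L - p)" unfolding CB1_def by auto
      then show ?thesis by (auto simp: b3_def goodB_def Ls_def intro!: goodB_I)
    next
      case 5
      then obtain L where "L \<in> Ls n" "t = (n - 1, 0, L)" unfolding CB2_def by auto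
      then show ?thesis using n by (auto simp: b3_def goodB_def Ls_def intro!: goodB_I)
    qed
  qed
  have "good n []" if "odd n"
  proof -
    have "goodB n 1 0 0" using n that by (simp add: goodB_def)
    then have "good n (blk 1 0 0)" by (rule goodB_I)
    then show ?thesis by (simp add: blk_def)
  qed
  with w gC show "w \<in> {w. good n w}" by (auto split: if_splits)
qed


lemma count_blk: "count (mset (blk m p r)) (X, m) = r"
  by (simp add: mset_blk)

lemma last_blk: "r \<ge> 1 \<Longrightarrow> last (blk m p r) = (X, m)"
  by (cases r) (simp_all add: blk_def)

lemma len_blk: "length (blk m p r) = p + r"
  by (simp add: blk_def)

lemma inj_b3: "inj_on b3 {t. snd (snd t) \<ge> 1}"
proof (rule inj_onI)
  fix s t assume s: "s \<in> {t. snd (snd t) \<ge> 1}" and t: "t \<in> {t. snd (snd t) \<ge> 1}" and e: "b3 s = b3 t"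
  obtain m p r where sd: "s = (m, p, r)" by (cases s) auto
  obtain m' p' r' where td: "t = (m', p', r')" by (cases t) auto
  have e': "blk m p r = blk m' p' r'" using e by (simp add: b3_def sd td)
  have r: "r \<ge> 1" "r' \<ge> 1" using s t by (simp_all add: sd td)
  have "m = m'" using last_blk[OF r(1), of m p] last_blk[OF r(2), of m' p'] e' by simp
  moreover have "r = r'" using count_blk[of m p r] count_blk[of m' p' r'] e' \<open>m = m'\<close> by simp
  moreover have "p = p'" using len_blk[of m p r] len_blk[of m' p' r'] e' \<open>r = r'\<close> by simp
  ultimately show "s = t" by (simp add: sd td)
qed

lemma Cset_sub: "2 \<le> n \<Longrightarrow> Cset n \<subseteq> {t. snd (snd t) \<ge> 1}"
  unfolding Cset_def CA_def CB1_def CB2_def Ls_def by auto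

lemma fin_Ls: "finite (Ls n)"
  by (rule finite_subset[of _ "{..n}"]) (auto simp: Ls_def)

lemma card_CA: "card (CA n) = (n - 2) * n"
proof -
  have "inj_on (\<lambda>(m, p). (m, p, n + 1 - p)) ({1..n-2} \<times> {1..n})" by (auto intro: inj_onI)
  then show ?thesis unfolding CA_def by (simp add: card_image card_cartesian_product)
qed

lemma card_CB1: "card (CB1 n) = (\<Sum>L\<in>Ls n. (n - 2) * L)"
proof -
  have "inj_on (\<lambda>(L, m, p). (m, p, L - p)) (SIGMA L:Ls n. {1..n-2} \<times> {..<L})"
  proof (rule inj_onI, clarsimp)
    fix L m p L' :: nat assume "p < L" "p < L'" "L - p = L' - p"
    then show "L = L'" by arith
  qed
  then have "card (CB1 n) = card (SIGMA L:Ls n. {1..n-2} \<times> {..<L})" unfolding CB1_def by (rule card_image)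
  also have "\<dots> = (\<Sum>L\<in>Ls n. card ({1..n-2} \<times> {..<L}))" using fin_Ls by (simp add: card_SigmaI)
  also have "\<dots> = (\<Sum>L\<in>Ls n. (n - 2) * L)" by (simp add: card_cartesian_product)
  finally show ?thesis .
qed

lemma card_CB2: "card (CB2 n) = card (Ls n)"
  unfolding CB2_def by (rule card_image) (auto intro: inj_onI)

lemma fin_C: "finite (CA n)" "finite (CB1 n)" "finite (CB2 n)"
  unfolding CA_def CB1_def CB2_def using fin_Ls by auto

lemma CA_mem: "t \<in> CA n \<Longrightarrow> 1 \<le> fst t \<and> fst t + 2 \<le> n \<and> fst (snd t) + snd (snd t) = n + 1"
  unfolding CA_def by auto

lemma CB1_mem: "t \<in> CB1 n \<Longrightarrow> 1 \<le> fst t \<and> fst t + 2 \<le> n \<and> fst (snd t) + snd (snd t) + 1 \<le> n"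
  unfolding CB1_def Ls_def by auto

lemma CB2_mem: "t \<in> CB2 n \<Longrightarrow> fst t = n - 1 \<and> fst (snd t) = 0 \<and> snd (snd t) + 1 \<le> n"
  unfolding CB2_def Ls_def by auto

lemma card_C:
  assumes n: "2 \<le> n"
  shows "card (Cset n) = 2 + (n - 2) * n + (\<Sum>L\<in>Ls n. (n - 2) * L) + card (Ls n)"
proof -
  have d1: "CA n \<inter> (CB1 n \<union> CB2 n) = {}"
  proof (rule ccontr)
    assume "CA n \<inter> (CB1 n \<union> CB2 n) \<noteq> {}"
    then obtain t where "t \<in> CA n" "t \<in> CB1 n \<or> t \<in> CB2 n" by blast
    then show False using CA_mem[of t n] CB1_mem[of t n] CB2_mem[of t n] by auto
  qed
  have d2: "CB1 n \<inter> CB2 n = {}"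
  proof (rule ccontr)
    assume "CB1 n \<inter> CB2 n \<noteq> {}"
    then obtain t where "t \<in> CB1 n" "t \<in> CB2 n" by blast
    then show False using CB1_mem[of t n] CB2_mem[of t n] by auto
  qed
  have a: "(0, n, 1) \<notin> insert (n - 1, 1, n) (CA n \<union> CB1 n \<union> CB2 n)"
    using n CA_mem[of "(0, n, 1)" n] CB1_mem[of "(0, n, 1)" n] CB2_mem[of "(0, n, 1)" n] by auto
  have b: "(n - 1, 1, n) \<notin> CA n \<union> CB1 n \<union> CB2 n"
    using n CA_mem[of "(n - 1, 1, n)" n] CB1_mem[of "(n - 1, 1, n)" n] CB2_mem[of "(n - 1, 1, n)" n] by auto
  have "card (CA n \<union> CB1 n \<union> CB2 n) = card (CA n) + card (CB1 n \<union> CB2 n)"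
    using d1 fin_C by (simp add: card_Un_disjoint Un_assoc)
  also have "card (CB1 n \<union> CB2 n) = card (CB1 n) + card (CB2 n)"
    using d2 fin_C by (simp add: card_Un_disjoint)
  finally have u: "card (CA n \<union> CB1 n \<union> CB2 n) = card (CA n) + card (CB1 n) + card (CB2 n)" by simp
  have "card (Cset n) = Suc (Suc (card (CA n \<union> CB1 n \<union> CB2 n)))"
    unfolding Cset_def using a b fin_C by simp
  then show ?thesis using u by (simp add: card_CA card_CB1 card_CB2)
qed

lemma card_good:
  assumes n: "2 \<le> n"
  shows "card {w. good n w} = 2 + (n - 2) * n + (\<Sum>L\<in>Ls n. (n - 2) * L) + card (Ls n) + (if odd n then 1 else 0)"
proof -
  have "[] \<notin> b3 ` Cset n"
  proof
    assume "[] \<in> b3 ` Cset n"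
    then obtain t where "t \<in> Cset n" "b3 t = []" by auto
    then show False using Cset_sub[OF n] by (cases t) (auto simp: b3_def blk_def)
  qed
  moreover have "card (b3 ` Cset n) = card (Cset n)"
    using inj_on_subset[OF inj_b3 Cset_sub[OF n]] by (rule card_image)
  moreover have "finite (b3 ` Cset n)" unfolding Cset_def using fin_C by simp
  ultimately show ?thesis unfolding good_set[OF n] card_C[OF n, symmetric] by auto
qed

lemma Ls_odd: "Ls (2 * k + 1) = (\<lambda>j. 2 * j) ` {1..k}"
proof (intro set_eqI iffI)
  fix L assume "L \<in> Ls (2 * k + 1)"
  then have "1 \<le> L" "L \<le> 2 * k" "even L" unfolding Ls_def by auto
  then show "L \<in> (\<lambda>j. 2 * j) ` {1..k}" by (intro image_eqI[of _ _ "L div 2"]) auto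
qed (auto simp: Ls_def)

lemma Ls_even: "Ls (2 * k) = (\<lambda>j. 2 * j + 1) ` {..<k}"
proof (intro set_eqI iffI)
  fix L assume "L \<in> Ls (2 * k)"
  then have "1 \<le> L" "L + 1 \<le> 2 * k" "odd L" unfolding Ls_def by auto
  then show "L \<in> (\<lambda>j. 2 * j + 1) ` {..<k}" by (intro image_eqI[of _ _ "L div 2"]) auto
qed (auto simp: Ls_def)

lemma sum_even: "(\<Sum>j\<in>{1..k}. 2 * j) = k * (k + 1::nat)"
  by (induction k) auto

lemma sum_oddn: "(\<Sum>j<k. 2 * j + 1) = k * (k::nat)"
  by (induction k) auto

lemma count_odd:
  assumes "1 \<le> k"
  shows "card {w. good (2 * k + 1) w} = 2 * k ^ 3 + 5 * k ^ 2 + 2"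
proof -
  obtain k' where k: "k = Suc k'" using assms by (cases k) auto
  have n2: "2 * k + 1 - 2 = 2 * k' + 1" by (simp add: k)
  have s: "(\<Sum>L\<in>Ls (2 * k + 1). (2 * k + 1 - 2) * L) = (2 * k' + 1) * (k * (k + 1))"
  proof -
    have r: "(\<Sum>L\<in>(\<lambda>j. 2 * j) ` {1..k}. L) = k * (k + 1)"
      using sum.reindex[of "\<lambda>j. 2 * j" "{1..k}" "\<lambda>L. L"] sum_even[of k] by (simp add: inj_on_def)
    show ?thesis unfolding Ls_odd n2 sum_distrib_left[symmetric] r ..
  qed
  have c: "card (Ls (2 * k + 1)) = k" unfolding Ls_odd by (subst card_image) (auto simp: inj_on_def)
  have "card {w. good (2 * k + 1) w} = 2 + (2 * k' + 1) * (2 * k + 1) + (2 * k' + 1) * (k * (k + 1)) + k + 1"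
    using card_good[of "2 * k + 1"] assms s c n2 by simp
  also have "\<dots> = 2 * k ^ 3 + 5 * k ^ 2 + 2"
    unfolding k by (simp add: algebra_simps power2_eq_square power3_eq_cube)
  finally show ?thesis .
qed

lemma count_even:
  assumes "2 \<le> k"
  shows "card {w. good (2 * k) w} = (k + 2) * (2 * k ^ 2 - 2 * k + 1)"
proof -
  obtain k' where k: "k = Suc (Suc k')" using assms by (metis add_2_eq_Suc le_Suc_ex)
  have n2: "2 * k - 2 = 2 * k' + 2" by (simp add: k)
  have s: "(\<Sum>L\<in>Ls (2 * k). (2 * k - 2) * L) = (2 * k' + 2) * (k * k)"
  proof -
    have r: "(\<Sum>L\<in>(\<lambda>j. 2 * j + 1) ` {..<k}. L) = k * k"
      using sum.reindex[of "\<lambda>j. 2 * j + 1" "{..<k}" "\<lambda>L. L"] sum_oddn[of k] by (simp add: inj_on_def)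
    show ?thesis unfolding Ls_even n2 sum_distrib_left[symmetric] r ..
  qed
  have c: "card (Ls (2 * k)) = k" unfolding Ls_even by (subst card_image) (auto simp: inj_on_def)
  have e: "even (2 * k)" by simp
  have "card {w. good (2 * k) w} = 2 + (2 * k' + 2) * (2 * k) + (2 * k' + 2) * (k * k) + k"
    using card_good[of "2 * k"] assms s c n2 e by simp
  also have "2 * k ^ 2 - 2 * k + 1 = 2 * k * (k' + 1) + 1"
    unfolding k by (simp add: algebra_simps power2_eq_square)
  then have "2 + (2 * k' + 2) * (2 * k) + (2 * k' + 2) * (k * k) + k = (k + 2) * (2 * k ^ 2 - 2 * k + 1)"
    unfolding k by (simp add: algebra_simps power2_eq_square)
  finally show ?thesis .
qed


theorem proposition3p9:
  fixes n :: nat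
  assumes "n \<ge> 3"
  shows "(\<forall>k. n = 2 * k + 1 \<longrightarrow>
            card (terms ((D_tansec ^^ n) (word_elem [(X, 0)]) :: (xy, 'k::{comm_ring_1, ring_char_0}) elem))
              = 2 * k ^ 3 + 5 * k ^ 2 + 2)
       \<and> (\<forall>k. n = 2 * k \<longrightarrow>
            card (terms ((D_tansec ^^ n) (word_elem [(X, 0)]) :: (xy, 'k) elem))
              = (k + 2) * (2 * k ^ 2 - 2 * k + 1))"
proof -
  have t: "terms ((D_tansec ^^ n) (word_elem [(X, 0)]) :: (xy, 'k) elem) = {w. good n w}"
    using assms by (intro terms_fn_good) simp
  show ?thesis
  proof (intro conjI allI impI)
    fix k assume nk: "n = 2 * k + 1"
    then have "1 \<le> k" using assms by simp
    then show "card (terms ((D_tansec ^^ n) (word_elem [(X, 0)]) :: (xy, 'k) elem)) = 2 * k ^ 3 + 5 * k ^ 2 + 2"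
      using count_odd[OF \<open>1 \<le> k\<close>] t nk by simp
  next
    fix k assume nk: "n = 2 * k"
    then have "2 \<le> k" using assms by simp
    then show "card (terms ((D_tansec ^^ n) (word_elem [(X, 0)]) :: (xy, 'k) elem)) = (k + 2) * (2 * k ^ 2 - 2 * k + 1)"
      using count_even[OF \<open>2 \<le> k\<close>] t nk by simp
  qed
qed

end
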